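(* Let $X$ be the compact symplectic toric manifold determined by a moment polytope $P\subset\mathbb{R}^n$. If the toric fiber $L(\mathbf{u})$ over an interior point $\mathbf{u}$ of $P$ is bulk-balanced, then $L(\mathbf{u})$ is strongly bulk-balanced.
   Context: $P=\bigcap_{j=1}^m\{\mathbf{u}:\ell_j(\mathbf{u})\ge0\}$, $\ell_j(\mathbf{u})=\langle\mathbf{u},\mathbf{v}_j\rangle-\lambda_j$, with $\mathbf{v}_j\in\mathbb{Z}^n$ primitive inward facet normals and non-redundant half-spaces. $L(\mathbf{u})$ is the Lagrangian torus fiber over $\mathbf{u}$. Leading term equations: for $\mathbf{u}\in\mathrm{Int}(P)$ let $S_1<S_2<\cdots$ be the distinct values of $\ell_j(\mathbf{u})$, $I_l=\{j:\ell_j(\mathbf{u})=S_l\}$, $A_l^\perp=\mathrm{span}_\mathbb{R}\{\mathbf{v}_j: j\in I_1\cup\dots\cup I_l\}$, $d_l=\dim A^\perp_l-\dim A^\perp_{l-1}$, $\kappa$ minimal with $A^\perp_\kappa=\mathbb{R}^n$. Choose $e^*_{r,s}\in\mathbb{Q}^n$ ($1\le r\le\kappa$, $1\le s\le d_r$) so that $\{e^*_{r,s}:r\le l\}$ is a $\mathbb{Q}$-basis of $A_l^\perp\cap\mathbb{Q}^n$ for each $l$ and each $\mathbf{v}_j\in\bigoplus\mathbb{Z}e^*_{r,s}$; write $\mathbf{y}^{\mathbf{v}_j}=\prod y_{r,s}^{v_j^{r,s}}$ where $\mathbf{v}_j=\sum v_j^{r,s}e^*_{r,s}$. For $c\in(\mathbb{C}^*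 )^m$ let $F_l^c=\sum_{j\in I_l}c_j\mathbf{y}^{\mathbf{v}_j}$; the generalized leading term equation is $y_{l,s}\partial F^c_l/\partial y_{l,s}=0$ ($1\le l\le\kappa$, $1\le s\le d_l$), and for $c=(1,\dots,1)$ it is called the leading term equation at $\mathbf{u}$ of $P$. (Solvability in $(\mathbb{C}^* )^n$ is independent of the choice of $e^*_{r,s}$.) $L(\mathbf{u})$ is strongly bulk-balanced if for some $c\in(\mathbb{C}^* )^m$ the generalized leading term equation at $\mathbf{u}$ of $P$ has a solution in $(\mathbb{C}^* )^n$. $L(\mathbf{u})$ is bulk-balanced if there is a sequence of triples $(\omega^{(i)},P^{(i)},\mathbf{u}^{(i)})$ such that: each $P^{(i)}$ is a polytope with the same normal fan as $P$ and $\omega^{(i)}$ the corresponding torus-invariant symplectic form on the same complex toric manifold, with $\omega^{(i)}\to\omega$; $P^{(i)}\to P$ in Hausdorff distance; $\mathbf{u}^{(i)}\in\mathrm{Int}(P^{(i)})$, $\mathbf{u}^{(i)}\to\mathbf{u}$; and for each $i$ the leading term equation at $\mathbf{u}^{(i)}$ of $P^{(i)}$ has a solution in $(\mathbb{C}^* )^n$. *)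

theory Defs
  imports "HOL-Analysis.Analysis"
begin

text \<open>Polytopes P = {u. for all j, <u, v j> - lam j >= 0} with facet data
  v :: 'm => real^'n (inward normals) and lam :: 'm => real, the index types
  'm (facets, m = CARD('m)) and 'n (coordinates, n = CARD('n)) being finite.\<close>

definition integral_vec :: "real^'n \<Rightarrow> bool" where
  "integral_vec x \<longleftrightarrow> (\<forall>i. x $ i \<in> \<int>)"

definition primitive_vec :: "real^'n \<Rightarrow> bool" where
  "primitive_vec x \<longleftrightarrow> integral_vec x \<and> x \<noteq> 0 \<and>
     (\<forall>(k::int) w. integral_vec w \<and> x = of_int k *\<^sub>R w \<longrightarrow> \<bar>k\<bar> = 1)"

definition ell :: "('m \<Rightarrow> real^'n) \<Rightarrow> ('m \<Rightarrow> real) \<Rightarrow> 'm \<Rightarrow> real^'n \<Rightarrow> real" where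
  "ell v lam j u = inner u (v j) - lam j"

definition halfspace_poly :: "('m \<Rightarrow> real^'n) \<Rightarrow> ('m \<Rightarrow> real) \<Rightarrow> (real^'n) set" where
  "halfspace_poly v lam = {u. \<forall>j. ell v lam j u \<ge> 0}"

definition nonredundant :: "('m \<Rightarrow> real^'n) \<Rightarrow> ('m \<Rightarrow> real) \<Rightarrow> bool" where
  "nonredundant v lam \<longleftrightarrow>
     (\<forall>j. {u. \<forall>i. i \<noteq> j \<longrightarrow> ell v lam i u \<ge> 0} \<noteq> halfspace_poly v lam)"

definition active :: "('m \<Rightarrow> real^'n) \<Rightarrow> ('m \<Rightarrow> real) \<Rightarrow> real^'n \<Rightarrow> 'm set" where
  "active v lam x = {j. ell v lam j x = 0}"

text \<open>Delzant (moment polytope of a compact symplectic toric manifold):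
  bounded, full-dimensional, primitive integral inward normals, non-redundant,
  and at each vertex the normals of the facets through it form a Z-basis of Z^n.\<close>
definition delzant :: "('m \<Rightarrow> real^'n) \<Rightarrow> ('m \<Rightarrow> real) \<Rightarrow> bool" where
  "delzant v lam \<longleftrightarrow>
     bounded (halfspace_poly v lam) \<and> interior (halfspace_poly v lam) \<noteq> {} \<and>
     (\<forall>j. primitive_vec (v j)) \<and> nonredundant v lam \<and>
     (\<forall>x. x extreme_point_of (halfspace_poly v lam) \<longrightarrow>
        (let J = active v lam x in
           inj_on v J \<and> card J = CARD('n) \<and> independent (v ` J) \<and>
           (\<forall>w. integral_vec w \<longrightarrow> (\<exists>a::'m \<Rightarrow> int. w = (\<Sum>j\<in>J. of_int (a j) *\<^sub>R v j)))))"

text \<open>Levels are indexed by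
  the value S_l itself (lev k = S_l means e_k = e*_{l,s} for some s), and
  a j k are the integer coordinates v_j = sum_k a j k e_k.\<close>
definition adapted_basis ::
  "('m \<Rightarrow> real^'n) \<Rightarrow> ('m \<Rightarrow> real) \<Rightarrow> real^'n \<Rightarrow>
   ('n \<Rightarrow> real^'n) \<Rightarrow> ('n \<Rightarrow> real) \<Rightarrow> ('m \<Rightarrow> 'n \<Rightarrow> int) \<Rightarrow> bool" where
  "adapted_basis v lam u e lev a \<longleftrightarrow>
     (\<forall>k i. e k $ i \<in> \<rat>) \<and> inj e \<and> independent (range e) \<and>
     (\<forall>k. lev k \<in> range (\<lambda>j. ell v lam j u)) \<and>
     (\<forall>t. span (e ` {k. lev k \<le> t}) = span (v ` {j. ell v lam j u \<le> t})) \<and>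
     (\<forall>j. v j = (\<Sum>k\<in>UNIV. of_int (a j k) *\<^sub>R e k))"

text \<open>y_{l,s} dF_l^c/dy_{l,s} = sum_{j in I_l} c_j v_j^{l,s} y^{v_j}\<close>
definition lte_solution ::
  "('m \<Rightarrow> real^'n) \<Rightarrow> ('m \<Rightarrow> real) \<Rightarrow> real^'n \<Rightarrow> ('m \<Rightarrow> complex) \<Rightarrow>
   ('n \<Rightarrow> real) \<Rightarrow> ('m \<Rightarrow> 'n \<Rightarrow> int) \<Rightarrow> ('n \<Rightarrow> complex) \<Rightarrow> bool" where
  "lte_solution v lam u c lev a y \<longleftrightarrow>
     (\<forall>k. y k \<noteq> 0) \<and>
     (\<forall>k. (\<Sum>j\<in>{j. ell v lam j u = lev k}.
            c j * of_int (a j k) * (\<Prod>k'\<in>UNIV. y k' powi a j k')) = 0)"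

definition gen_lte_solvable ::
  "('m \<Rightarrow> real^'n) \<Rightarrow> ('m \<Rightarrow> real) \<Rightarrow> real^'n \<Rightarrow> ('m \<Rightarrow> complex) \<Rightarrow> bool" where
  "gen_lte_solvable v lam u c \<longleftrightarrow>
     (\<exists>e lev a y. adapted_basis v lam u e lev a \<and> lte_solution v lam u c lev a y)"

definition lte_solvable :: "('m \<Rightarrow> real^'n) \<Rightarrow> ('m \<Rightarrow> real) \<Rightarrow> real^'n \<Rightarrow> bool" where
  "lte_solvable v lam u \<longleftrightarrow> gen_lte_solvable v lam u (\<lambda>_. 1)"

definition strongly_bulk_balanced :: "('m \<Rightarrow> real^'n) \<Rightarrow> ('m \<Rightarrow> real) \<Rightarrow> real^'n \<Rightarrow> bool" where
  "strongly_bulk_balanced v lam u \<longleftrightarrow>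
     (\<exists>c. (\<forall>j. c j \<noteq> 0) \<and> gen_lte_solvable v lam u c)"

definition normal_fan :: "('m \<Rightarrow> real^'n) \<Rightarrow> ('m \<Rightarrow> real) \<Rightarrow> (real^'n) set set" where
  "normal_fan v lam = {cone hull (v ` active v lam x) | x. x \<in> halfspace_poly v lam}"

definition hausdist :: "('a::metric_space) set \<Rightarrow> 'a set \<Rightarrow> real" where
  "hausdist A B = max (SUP a\<in>A. infdist a B) (SUP b\<in>B. infdist b A)"

text \<open>Any polytope with the same normal fan as P has the same primitive
  normals v, so it is halfspace_poly v lam' for some lam'.  The symplectic form
  omega' is determined by lam'; omega' -> omega is rendered as lam' -> lam.\<close>
definition bulk_balanced :: "('m \<Rightarrow> real^'n) \<Rightarrow> ('m \<Rightarrow> real) \<Rightarrow> real^'n \<Rightarrow> bool" where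
  "bulk_balanced v lam u \<longleftrightarrow>
     (\<exists>(lams :: nat \<Rightarrow> 'm \<Rightarrow> real) (us :: nat \<Rightarrow> real^'n).
        (\<forall>i. normal_fan v (lams i) = normal_fan v lam) \<and>
        (\<forall>j. (\<lambda>i. lams i j) \<longlonglongrightarrow> lam j) \<and>
        (\<lambda>i. hausdist (halfspace_poly v (lams i)) (halfspace_poly v lam)) \<longlonglongrightarrow> 0 \<and>
        (\<forall>i. us i \<in> interior (halfspace_poly v (lams i))) \<and>
        us \<longlonglongrightarrow> u \<and>
        (\<forall>i. lte_solvable v (lams i) (us i)))"

end

theory Submission
  imports Defs
begin

lemma coord_unique:
  fixes e :: "'k::finite \<Rightarrow> 'a::real_vector"
  assumes inj: "inj e" and ind: "independent (range e)"
    and eq: "(\<Sum>k\<in>UNIV. f k *\<^sub>R e k) = (\<Sum>k\<in>UNIV. g k *\<^sub>R e k)"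
  shows "f = g"
proof -
  let ?h = "\<lambda>x. f (inv e x) - g (inv e x)"
  have "(\<Sum>x\<in>range e. ?h x *\<^sub>R x) = (\<Sum>k\<in>UNIV. ?h (e k) *\<^sub>R e k)"
    by (rule sum.reindex[OF inj, simplified comp_def])
  also have "\<dots> = (\<Sum>k\<in>UNIV. (f k - g k) *\<^sub>R e k)"
    using inj by simp
  also have "\<dots> = 0" using eq by (simp add: scaleR_diff_left sum_subtractf)
  finally have h0: "(\<Sum>x\<in>range e. ?h x *\<^sub>R x) = 0" .
  have ind2: "\<forall>c. (\<Sum>x\<in>range e. c x *\<^sub>R x) = 0 \<longrightarrow> (\<forall>x\<in>range e. c x = 0)"
    using ind[unfolded real_vector.independent_explicit_finite_subsets] finite by blast
  have "\<forall>x\<in>range e. ?h x = 0" using ind2[rule_format, OF h0] by blast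
  then show ?thesis using inj by (auto simp: fun_eq_iff)
qed

lemma span_image_sum:
  fixes f :: "'j \<Rightarrow> 'a::real_vector"
  assumes "finite S" "x \<in> span (f ` S)"
  shows "\<exists>g. x = (\<Sum>j\<in>S. g j *\<^sub>R f j)"
  using assms
proof (induction S arbitrary: x rule: finite_induct)
  case empty
  then show ?case by simp
next
  case (insert j S)
  have "x \<in> span (insert (f j) (f ` S))" using insert.prems by simp
  then obtain k where "x - k *\<^sub>R f j \<in> span (f ` S)"
    unfolding span_insert by blast
  then obtain g where g: "x - k *\<^sub>R f j = (\<Sum>i\<in>S. g i *\<^sub>R f i)"
    using insert.IH by blast
  have e1: "(\<Sum>i\<in>S. (g(j:=k)) i *\<^sub>R f i) = (\<Sum>i\<in>S. g i *\<^sub>R f i)"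
    using insert.hyps(2) by (intro sum.cong) auto
  have "(\<Sum>i\<in>insert j S. (g(j:=k)) i *\<^sub>R f i) = (g(j:=k)) j *\<^sub>R f j + (\<Sum>i\<in>S. (g(j:=k)) i *\<^sub>R f i)"
    by (rule sum.insert[OF insert.hyps])
  also have "\<dots> = k *\<^sub>R f j + (\<Sum>i\<in>S. g i *\<^sub>R f i)" using e1 by simp
  also have "\<dots> = x" using g by (simp add: algebra_simps)
  finally have "x = (\<Sum>i\<in>insert j S. (g(j:=k)) i *\<^sub>R f i)" by simp
  then show ?case by blast
qed

lemma full_support:
  fixes V :: "('m::finite \<Rightarrow> complex) set"
  assumes add: "\<And>x z. x\<in>V \<Longrightarrow> z\<in>V \<Longrightarrow> (\<lambda>j. x j + z j) \<in> V"
    and smul: "\<And>x t. x\<in>V \<Longrightarrow> (\<lambda>j. t * x j) \<in> V"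
    and ex: "\<And>j. \<exists>x\<in>V. x j \<noteq> 0"
  shows "\<exists>x\<in>V. \<forall>j. x j \<noteq> 0"
proof -
  have "finite S \<Longrightarrow> \<exists>x\<in>V. \<forall>j\<in>S. x j \<noteq> 0" for S :: "'m set"
  proof (induction S rule: finite_induct)
    case empty
    then show ?case using ex by blast
  next
    case (insert j0 S)
    then obtain x where x: "x \<in> V" "\<forall>j\<in>S. x j \<noteq> 0" by blast
    obtain w where w: "w \<in> V" "w j0 \<noteq> 0" using ex by blast
    let ?B = "(\<lambda>j. - x j / w j) ` insert j0 S"
    have "finite ?B" using insert by simp
    then obtain t where t: "t \<notin> ?B"
      using ex_new_if_finite[OF infinite_UNIV_char_0] by blast
    have "\<forall>j\<in>insert j0 S. x j + t * w j \<noteq> 0"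
    proof
      fix j assume j: "j \<in> insert j0 S"
      show "x j + t * w j \<noteq> 0"
      proof (cases "w j = 0")
        case True
        then have "j \<in> S" using j w by auto
        then show ?thesis using x True by simp
      next
        case False
        have tn: "t \<noteq> - x j / w j" using t j by blast
        show ?thesis
        proof
          assume h: "x j + t * w j = 0"
          have "t * w j = - x j" using h by (metis add.commute eq_neg_iff_add_eq_0)
          then have "t = - x j / w j" using False by (simp add: field_simps)
          then show False using tn by contradiction
        qed
      qed
    qed
    moreover have "(\<lambda>j. x j + t * w j) \<in> V" using add[OF x(1) smul[OF w(1)]] .
    ultimately show ?case by (intro bexI[of _ "\<lambda>j. x j + t * w j"]) auto
  qed
  from this[of UNIV] show ?thesis by simp
qed


lemma transfer:
  fixes v :: "'m::finite \<Rightarrow> real^'n::finite" and lam lam' :: "'m \<Rightarrow> real" and u u' :: "real^'n"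
  assumes ab: "adapted_basis v lam' u' e lev a"
    and sol: "lte_solution v lam' u' (\<lambda>_. 1) lev a y"
    and ord: "\<And>j j'. ell v lam j u < ell v lam j' u \<Longrightarrow> ell v lam' j u' < ell v lam' j' u'"
  shows "strongly_bulk_balanced v lam u"
proof -
  define L where "L j = ell v lam j u" for j
  define M where "M j = ell v lam' j u'" for j
  have ordL: "M j \<le> M j' \<Longrightarrow> L j \<le> L j'" for j j' using ord[of j' j] unfolding L_def M_def by force
  have eqL: "M j = M j' \<Longrightarrow> L j = L j'" for j j' using ordL[of j j'] ordL[of j' j] by simp
  have ordM: "L j < L j' \<Longrightarrow> M j < M j'" for j j' using ord unfolding L_def M_def by blast
  from ab have erat: "\<forall>k i. e k $ i \<in> \<rat>" and inj: "inj e" and ind: "independent (range e)"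
    and levr: "\<And>k. lev k \<in> range M"
    and spn: "\<And>t. span (e ` {k. lev k \<le> t}) = span (v ` {j. M j \<le> t})"
    and vexp: "\<And>j. v j = (\<Sum>k\<in>UNIV. of_int (a j k) *\<^sub>R e k)"
    unfolding adapted_basis_def M_def[abs_def] by auto
  from sol have yne: "\<And>k. y k \<noteq> 0"
    and soleq: "\<And>k. (\<Sum>j\<in>{j. M j = lev k}. 1 * of_int (a j k) * (\<Prod>k'\<in>UNIV. y k' powi a j k')) = 0"
    unfolding lte_solution_def M_def by auto
  have Z: "a j k = 0" if jk: "M j < lev k" for j k
  proof -
    have "v j \<in> span (v ` {j'. M j' \<le> M j})" by (rule span_base) auto
    also have "\<dots> = span (e ` {k. lev k \<le> M j})" using spn by simp
    finally obtain g where g: "v j = (\<Sum>k\<in>{k. lev k \<le> M j}. g k *\<^sub>R e k)"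
      using span_image_sum[of "{k. lev k \<le> M j}"] by auto
    have "v j = (\<Sum>k\<in>UNIV. (if lev k \<le> M j then g k else 0) *\<^sub>R e k)"
      using g by (simp add: if_distrib[of "\<lambda>x. x *\<^sub>R _"] sum.inter_filter[symmetric] cong: if_cong)
    then have "(\<Sum>k\<in>UNIV. real_of_int (a j k) *\<^sub>R e k) = (\<Sum>k\<in>UNIV. (if lev k \<le> M j then g k else 0) *\<^sub>R e k)"
      using vexp[of j] by simp
    then have "(\<lambda>k. real_of_int (a j k)) = (\<lambda>k. if lev k \<le> M j then g k else 0)"
      by (rule coord_unique[OF inj ind])
    then have "real_of_int (a j k) = (if lev k \<le> M j then g k else 0)"
      by (simp add: fun_eq_iff)
    then show "a j k = 0" using jk by simp
  qed
  have B: "\<exists>\<gamma>::'m\<Rightarrow>real. (\<forall>j. s \<le> M j \<longrightarrow> \<gamma> j = 0) \<and>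
      (\<forall>k'. (\<Sum>j\<in>UNIV. \<gamma> j * of_int (a j k')) = (if k' = k then 1 else 0))"
    if ks: "lev k < s" for k s
  proof -
    have "e k \<in> span (e ` {k'. lev k' \<le> lev k})" by (rule span_base) auto
    also have "\<dots> = span (v ` {j. M j \<le> lev k})" using spn by simp
    finally obtain g where g: "e k = (\<Sum>j\<in>{j. M j \<le> lev k}. g j *\<^sub>R v j)"
      using span_image_sum[of "{j. M j \<le> lev k}"] by auto
    define \<gamma> where "\<gamma> j = (if M j \<le> lev k then g j else 0)" for j
    have "e k = (\<Sum>j\<in>UNIV. \<gamma> j *\<^sub>R v j)"
      using g unfolding \<gamma>_def
      by (simp add: if_distrib[of "\<lambda>x. x *\<^sub>R _"] sum.inter_filter[symmetric] cong: if_cong)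
    also have "\<dots> = (\<Sum>j\<in>UNIV. \<gamma> j *\<^sub>R (\<Sum>k'\<in>UNIV. of_int (a j k') *\<^sub>R e k'))"
      using vexp by simp
    also have "\<dots> = (\<Sum>k'\<in>UNIV. (\<Sum>j\<in>UNIV. \<gamma> j * of_int (a j k')) *\<^sub>R e k')"
      by (simp add: scaleR_sum_right scaleR_sum_left) (rule sum.swap)
    finally have ek2: "e k = (\<Sum>k'\<in>UNIV. (\<Sum>j\<in>UNIV. \<gamma> j * of_int (a j k')) *\<^sub>R e k')" .
    have ek1: "(\<Sum>k'\<in>UNIV. (if k' = k then 1 else 0) *\<^sub>R e k') = e k"
      by (simp add: if_distrib[of "\<lambda>x. x *\<^sub>R _"] cong: if_cong)
    have "(\<Sum>k'\<in>UNIV. (if k' = k then 1 else 0) *\<^sub>R e k') =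
        (\<Sum>k'\<in>UNIV. (\<Sum>j\<in>UNIV. \<gamma> j * of_int (a j k')) *\<^sub>R e k')"
      using ek1 ek2 by (rule trans)
    then have "(\<lambda>k'. if k' = k then 1 else 0) = (\<lambda>k'. \<Sum>j\<in>UNIV. \<gamma> j * of_int (a j k'))"
      by (rule coord_unique[OF inj ind])
    then have h1: "\<forall>k'. (\<Sum>j\<in>UNIV. \<gamma> j * of_int (a j k')) = (if k' = k then 1 else 0)"
      by (simp add: fun_eq_iff)
    have h2: "\<forall>j. s \<le> M j \<longrightarrow> \<gamma> j = 0"
    proof (intro allI impI)
      fix j assume "s \<le> M j"
      then have "\<not> M j \<le> lev k" using ks by linarith
      then show "\<gamma> j = 0" by (simp add: \<gamma>_def)
    qed
    show ?thesis by (rule exI[of _ \<gamma>]) (intro conjI h2 h1)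
  qed
  define Y where "Y j = (\<Prod>k'\<in>UNIV. y k' powi a j k')" for j
  have Yne: "Y j \<noteq> 0" for j using yne unfolding Y_def by simp
  define \<sigma> where "\<sigma> k = (SOME j. M j = lev k)" for k
  have Msig: "M (\<sigma> k) = lev k" for k
  proof -
    from levr[of k] obtain j where "M j = lev k" by (metis imageE)
    then show ?thesis unfolding \<sigma>_def by (rule someI)
  qed
  define lev' where "lev' k = L (\<sigma> k)" for k
  define V where "V = {c::'m\<Rightarrow>complex. \<forall>k. (\<Sum>j\<in>{j. L j = lev' k}. c j * of_int (a j k)) = 0}"
  have Vadd: "(\<lambda>j. c j + d j) \<in> V" if "c \<in> V" "d \<in> V" for c d
    using that unfolding V_def by (simp add: distrib_right sum.distrib)
  have Vsmul: "(\<lambda>j. t * c j) \<in> V" if "c \<in> V" for c t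
  proof -
    have "(\<Sum>j\<in>{j. L j = lev' k}. t * c j * of_int (a j k)) = t * (\<Sum>j\<in>{j. L j = lev' k}. c j * of_int (a j k))" for k
      by (simp add: sum_distrib_left mult.assoc)
    then show ?thesis using that unfolding V_def by simp
  qed
  have Vex: "\<exists>c\<in>V. c j0 \<noteq> 0" for j0
  proof -
    define s where "s = M j0"
    define x where "x k = (\<Sum>j\<in>{j. M j = s}. Y j * of_int (a j k))" for k
    have "\<forall>k. \<exists>\<gamma>::'m\<Rightarrow>real. lev k < s \<longrightarrow> ((\<forall>j. s \<le> M j \<longrightarrow> \<gamma> j = 0) \<and>
      (\<forall>k'. (\<Sum>j\<in>UNIV. \<gamma> j * of_int (a j k')) = (if k' = k then 1 else 0)))"
      using B by blast
    then obtain \<Gamma> :: "'n \<Rightarrow> 'm \<Rightarrow> real" where \<Gamma>: "\<And>k. lev k < s \<Longrightarrow> (\<forall>j. s \<le> M j \<longrightarrow> \<Gamma> k j = 0) \<and>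
      (\<forall>k'. (\<Sum>j\<in>UNIV. \<Gamma> k j * of_int (a j k')) = (if k' = k then 1 else 0))"
      by metis
    define \<beta> where "\<beta> j = (\<Sum>k\<in>{k. lev k < s}. x k * of_real (\<Gamma> k j))" for j
    have I: "x k' = (\<Sum>j\<in>{j. M j < s}. \<beta> j * of_int (a j k'))" for k'
    proof -
      have \<beta>0: "\<beta> j = 0" if "\<not> M j < s" for j
        unfolding \<beta>_def using \<Gamma> that by (intro sum.neutral) auto
      have "(\<Sum>j\<in>{j. M j < s}. \<beta> j * of_int (a j k')) = (\<Sum>j\<in>UNIV. \<beta> j * of_int (a j k'))"
        using \<beta>0 by (intro sum.mono_neutral_left) auto
      also have "\<dots> = (\<Sum>j\<in>UNIV. \<Sum>k\<in>{k. lev k < s}. x k * (of_real (\<Gamma> k j) * of_int (a j k')))"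
        unfolding \<beta>_def by (simp add: sum_distrib_right mult.assoc)
      also have "\<dots> = (\<Sum>k\<in>{k. lev k < s}. \<Sum>j\<in>UNIV. x k * (of_real (\<Gamma> k j) * of_int (a j k')))"
        by (rule sum.swap)
      also have "\<dots> = (\<Sum>k\<in>{k. lev k < s}. x k * of_real (\<Sum>j\<in>UNIV. \<Gamma> k j * of_int (a j k')))"
        by (simp add: sum_distrib_left)
      also have "\<dots> = (\<Sum>k\<in>{k. lev k < s}. x k * (if k' = k then 1 else 0))"
        using \<Gamma> by (intro sum.cong) auto
      also have "\<dots> = (if lev k' < s then x k' else 0)"
        by (simp add: if_distrib[of "\<lambda>z. _ * z"] sum.inter_filter[symmetric] cong: if_cong)
      also have "\<dots> = x k'"
      proof (cases "lev k' < s")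
        case False
        show ?thesis
        proof (cases "lev k' = s")
          case True
          have "x k' = (\<Sum>j\<in>{j. M j = lev k'}. 1 * of_int (a j k') * (\<Prod>k''\<in>UNIV. y k'' powi a j k''))"
            unfolding x_def Y_def True by (simp add: mult.commute)
          then show ?thesis using soleq[of k'] False by simp
        next
          case ne: False
          have "x k' = 0" unfolding x_def
            using False ne Z by (intro sum.neutral) auto
          then show ?thesis using False by simp
        qed
      qed simp
      finally show ?thesis by simp
    qed
    define c where "c j = (if M j = s then Y j else 0) - (if M j < s \<and> L j = L j0 then \<beta> j else 0)" for j
    have "c \<in> V" unfolding V_def
    proof (intro CollectI allI)
      fix k
      show "(\<Sum>j\<in>{j. L j = lev' k}. c j * of_int (a j k)) = 0"
      proof (cases "lev' k = L j0")
        case False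
        have "c j = 0" if "L j = lev' k" for j
          using that False eqL[of j j0] unfolding c_def s_def by auto
        then show ?thesis by simp
      next
        case True
        have sp: "(\<Sum>j\<in>{j. L j = lev' k}. c j * of_int (a j k)) =
          (\<Sum>j\<in>{j. L j = L j0}. (if M j = s then Y j * of_int (a j k) else 0)) -
          (\<Sum>j\<in>{j. L j = L j0}. (if M j < s then \<beta> j * of_int (a j k) else 0))"
        proof -
          have "(\<Sum>j\<in>{j. L j = lev' k}. c j * of_int (a j k)) =
            (\<Sum>j\<in>{j. L j = L j0}. (if M j = s then Y j * of_int (a j k) else 0) -
               (if M j < s then \<beta> j * of_int (a j k) else 0))"
            unfolding True by (intro sum.cong refl) (simp add: c_def left_diff_distrib)
          then show ?thesis by (simp only: sum_subtractf)
        qed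
        have p1: "(\<Sum>j\<in>{j. L j = L j0}. (if M j = s then Y j * of_int (a j k) else 0)) = x k"
        proof -
          have "(\<Sum>j\<in>{j. L j = L j0}. (if M j = s then Y j * of_int (a j k) else 0)) =
              (\<Sum>j\<in>{j. M j = s}. Y j * of_int (a j k))"
          proof (rule sum.mono_neutral_cong_right)
            show "{j. M j = s} \<subseteq> {j. L j = L j0}" using eqL[of _ j0] unfolding s_def by blast
          qed auto
          then show ?thesis unfolding x_def .
        qed
        have p2: "(\<Sum>j\<in>{j. L j = L j0}. (if M j < s then \<beta> j * of_int (a j k) else 0)) =
            (\<Sum>j\<in>{j. M j < s}. \<beta> j * of_int (a j k))"
        proof -
          have z: "a j k = 0" if "M j < s" "L j \<noteq> L j0" for j
          proof -
            have "L j \<le> L j0" using ordL[of j j0] that unfolding s_def by simp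
            then have "L j < L (\<sigma> k)" using that True unfolding lev'_def by simp
            then have "M j < lev k" using ordM[of j "\<sigma> k"] Msig[of k] by simp
            then show ?thesis by (rule Z)
          qed
          have "(\<Sum>j\<in>{j. L j = L j0}. (if M j < s then \<beta> j * of_int (a j k) else 0)) =
              (\<Sum>j\<in>{j. M j < s \<and> L j = L j0}. \<beta> j * of_int (a j k))"
            by (intro sum.mono_neutral_cong_right) auto
          also have "\<dots> = (\<Sum>j\<in>{j. M j < s}. \<beta> j * of_int (a j k))"
            using z by (intro sum.mono_neutral_left) auto
          finally show ?thesis .
        qed
        show ?thesis using sp p1 p2 I[of k] by simp
      qed
    qed
    moreover have "c j0 \<noteq> 0" using Yne unfolding c_def s_def by simp
    ultimately show ?thesis by blast
  qed
  obtain c where cV: "c \<in> V" and cne: "\<And>j. c j \<noteq> 0"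
    using full_support[of V, OF Vadd Vsmul Vex] by blast
  have key: "M j \<le> Max (M ` T) \<longleftrightarrow> L j \<le> t" if T: "T = {j. L j \<le> t}" "T \<noteq> {}" for T t j
  proof
    assume "L j \<le> t" then show "M j \<le> Max (M ` T)" using T by (intro Max_ge) auto
  next
    assume h: "M j \<le> Max (M ` T)"
    have "Max (M ` T) \<in> M ` T" using T by (intro Max_in) auto
    then obtain j' where "j' \<in> T" "Max (M ` T) = M j'" by auto
    then show "L j \<le> t" using h ordL[of j j'] T by auto
  qed
  have spn': "span (e ` {k. lev' k \<le> t}) = span (v ` {j. L j \<le> t})" for t
  proof (cases "{j. L j \<le> t} = {}")
    case True
    then have "{k. lev' k \<le> t} = {}" unfolding lev'_def by auto
    then show ?thesis using True by simp
  next
    case False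
    define t' where "t' = Max (M ` {j. L j \<le> t})"
    have k1: "{k. lev' k \<le> t} = {k. lev k \<le> t'}"
      using key[OF refl False] Msig unfolding lev'_def t'_def by metis
    have k2: "{j. L j \<le> t} = {j. M j \<le> t'}"
      using key[OF refl False] unfolding t'_def by metis
    show ?thesis unfolding k1 k2 by (rule spn)
  qed
  have "adapted_basis v lam u e lev' a"
    unfolding adapted_basis_def
  proof (intro conjI)
    show "\<forall>k i. e k $ i \<in> \<rat>" by (rule erat)
    show "inj e" by (rule inj)
    show "independent (range e)" by (rule ind)
    show "\<forall>k. lev' k \<in> range (\<lambda>j. ell v lam j u)" unfolding lev'_def L_def by simp
    show "\<forall>t. span (e ` {k. lev' k \<le> t}) = span (v ` {j. ell v lam j u \<le> t})"
      using spn' unfolding L_def by blast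
    show "\<forall>j. v j = (\<Sum>k\<in>UNIV. of_int (a j k) *\<^sub>R e k)" using vexp by blast
  qed
  moreover have "lte_solution v lam u c lev' a (\<lambda>_. 1)"
    using cV unfolding lte_solution_def V_def L_def by simp
  ultimately show ?thesis
    unfolding strongly_bulk_balanced_def gen_lte_solvable_def using cne by blast
qed


theorem theoremB:
  fixes v :: "'m::finite \<Rightarrow> real^'n::finite" and lam :: "'m \<Rightarrow> real" and u :: "real^'n"
  assumes "delzant v lam"
    and "u \<in> interior (halfspace_poly v lam)"
    and "bulk_balanced v lam u"
  shows "strongly_bulk_balanced v lam u"
proof -
  from assms(3) obtain lams :: "nat \<Rightarrow> 'm \<Rightarrow> real" and us :: "nat \<Rightarrow> real^'n" where
    lim: "\<And>j. (\<lambda>i. lams i j) \<longlonglongrightarrow> lam j" and ulim: "us \<longlonglongrightarrow> u"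
    and sol: "\<And>i. lte_solvable v (lams i) (us i)"
    unfolding bulk_balanced_def by blast
  have conv: "(\<lambda>i. ell v (lams i) j (us i)) \<longlonglongrightarrow> ell v lam j u" for j
    unfolding ell_def by (intro tendsto_intros ulim lim)
  have pair: "eventually (\<lambda>i. ell v lam j u < ell v lam j' u \<longrightarrow>
      ell v (lams i) j (us i) < ell v (lams i) j' (us i)) sequentially" for j j'
  proof (cases "ell v lam j u < ell v lam j' u")
    case True
    have "(\<lambda>i. ell v (lams i) j' (us i) - ell v (lams i) j (us i)) \<longlonglongrightarrow> ell v lam j' u - ell v lam j u"
      by (intro tendsto_diff conv)
    moreover have "0 < ell v lam j' u - ell v lam j u" using True by simp
    ultimately have "eventually (\<lambda>i. 0 < ell v (lams i) j' (us i) - ell v (lams i) j (us i)) sequentially"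
      by (rule order_tendstoD(1))
    then show ?thesis by (rule eventually_mono) simp
  qed simp
  have "eventually (\<lambda>i. \<forall>j j'. ell v lam j u < ell v lam j' u \<longrightarrow>
      ell v (lams i) j (us i) < ell v (lams i) j' (us i)) sequentially"
    by (intro eventually_all_finite pair)
  then obtain N where N: "\<forall>i\<ge>N. \<forall>j j'. ell v lam j u < ell v lam j' u \<longrightarrow>
      ell v (lams i) j (us i) < ell v (lams i) j' (us i)"
    unfolding eventually_sequentially by blast
  from sol[of N] obtain e lev a y where ab: "adapted_basis v (lams N) (us N) e lev a"
    and ls: "lte_solution v (lams N) (us N) (\<lambda>_. 1) lev a y"
    unfolding lte_solvable_def gen_lte_solvable_def by blast
  show ?thesis
    by (rule transfer[OF ab ls]) (use N in blast)
qed

end
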